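(* Let $\ell$ and $m$ be positive integers with $\ell\le m-2$, let $G$ be a torsion-free group written additively, let $\mathbf{a}=(a_1,\dots,a_m)$ be a sequence of elements of $G$ with set of distinct terms $A$, and let $X=\{a\in A:\mu_{\mathbf{a}}(a)\ge2\}$. Assume $|X|\ge2$, and assume there exists a positive integer $t\ge2$, being the smallest positive integer with this property, such that \[ \sum_{i=1}^t\rho_{x_i}(\mathbf{a})\ge\ell+t \] for some $x_1,\dots,x_t\in X$. If \[ |\Sigma^{\ell}(\mathbf{a})|=\sum_{a\in A}\mu_{\mathbf{a}}(a)-\ell+1, \] then $A$ is an arithmetic progression.
   Context: $\Sigma^{\ell}(\mathbf{a})$ is the set of all elements $a_{i_1}+\cdots+a_{i_\ell}$ with $i_1,\dots,i_\ell\in[1,m]$ pairwise distinct, taken in any order. $\rho_a(\mathbf{a})=|\{i\in[1,m]:a_i=a\}|$ and $\mu_{\mathbf{a}}(a)=\min(\ell,\rho_a(\mathbf{a}))$. An arithmetic progression is a set $\{c+jd:j\in[0,k-1]\}$ with $d\neq0$. *)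

theory Defs
  imports Main
begin

definition nsum_times :: "nat \<Rightarrow> 'a::group_add \<Rightarrow> 'a" where
  "nsum_times n x = sum_list (replicate n x)"

definition torsion_free :: "'a::group_add itself \<Rightarrow> bool" where
  "torsion_free _ \<longleftrightarrow> (\<forall>(x::'a) n. n > 0 \<longrightarrow> nsum_times n x = 0 \<longrightarrow> x = 0)"

text \<open>Sequence a_1..a_m is a function on indices 1..m.\<close>
definition Sigma_l :: "nat \<Rightarrow> nat \<Rightarrow> (nat \<Rightarrow> 'a::group_add) \<Rightarrow> 'a set" where
  "Sigma_l l m a = {sum_list (map a is) | is. length is = l \<and> distinct is \<and> set is \<subseteq> {1..m}}"

definition rho :: "nat \<Rightarrow> (nat \<Rightarrow> 'a) \<Rightarrow> 'a \<Rightarrow> nat" where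
  "rho m a x = card {i \<in> {1..m}. a i = x}"

definition mu :: "nat \<Rightarrow> nat \<Rightarrow> (nat \<Rightarrow> 'a) \<Rightarrow> 'a \<Rightarrow> nat" where
  "mu l m a x = min l (rho m a x)"

definition is_arith_prog :: "'a::group_add set \<Rightarrow> bool" where
  "is_arith_prog S \<longleftrightarrow> (\<exists>c d k. d \<noteq> 0 \<and> S = {c + nsum_times j d | j. j < k})"

end

theory Submission
  imports Defs
begin


lemma nsum_0[simp]: "nsum_times 0 x = 0" by (simp add: nsum_times_def)
lemma nsum_Suc: "nsum_times (Suc n) x = x + nsum_times n x" by (simp add: nsum_times_def)
lemma nsum_add: "nsum_times (i + j) x = nsum_times i x + nsum_times j x"
  by (induction i) (simp_all add: nsum_Suc add.assoc)
lemma nsum_Suc': "nsum_times (Suc n) x = nsum_times n x + x"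
  using nsum_add[of n 1 x] by (simp add: nsum_Suc)
lemma nsum_conj: "nsum_times j (- c + g + c) = - c + nsum_times j g + c"
  by (induction j) (simp_all add: nsum_Suc add.assoc)

lemma tf_nsum_inj:
  fixes g :: "'a::group_add"
  assumes tf: "torsion_free TYPE('a)" and g: "g \<noteq> 0" and eq: "nsum_times i g = nsum_times j g"
  shows "i = j"
proof (rule ccontr)
  assume ne: "i \<noteq> j"
  { fix i j :: nat assume ij: "i < j" and e: "nsum_times i g = nsum_times j g"
    have "nsum_times j g = nsum_times i g + nsum_times (j - i) g"
      using nsum_add[of i "j - i" g] ij by simp
    with e have "nsum_times i g + nsum_times (j - i) g = nsum_times i g + 0" by simp
    hence "nsum_times (j - i) g = 0" by (rule add_left_imp_eq)
    with tf ij have "g = 0" unfolding torsion_free_def by (meson zero_less_diff) }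
  with ne eq g show False by (metis linorder_neqE_nat)
qed

lemma tf_stab:
  fixes g :: "'a::group_add"
  assumes tf: "torsion_free TYPE('a)" and fin: "finite A" and a: "a \<in> A"
    and st: "\<forall>x\<in>A. g + x \<in> A"
  shows "g = 0"
proof (rule ccontr)
  assume g: "g \<noteq> 0"
  have mem: "nsum_times j g + a \<in> A" for j
    by (induction j) (use a st in \<open>auto simp: nsum_Suc add.assoc\<close>)
  have "inj (\<lambda>j. nsum_times j g + a)"
    by (rule injI) (use tf_nsum_inj[OF tf g] in auto)
  hence "infinite (range (\<lambda>j. nsum_times j g + a))"
    using finite_imageD by blast
  moreover have "range (\<lambda>j. nsum_times j g + a) \<subseteq> A" using mem by auto
  ultimately show False using fin finite_subset by blast
qed

lemma chain_lemma:
  fixes g :: "'a::group_add"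
  assumes tf: "torsion_free TYPE('a)" and g: "g \<noteq> 0"
  shows "finite A \<Longrightarrow> card A = n \<Longrightarrow> n \<ge> 1 \<Longrightarrow> card {x\<in>A. g + x \<notin> A} \<le> 1 \<Longrightarrow>
     \<exists>e k. A = {nsum_times j g + e | j. j < k} \<and> k \<ge> 1 \<and> g + nsum_times (k - 1) g + e \<notin> A"
proof (induction n arbitrary: A)
  case 0 then show ?case by simp
next
  case (Suc n A)
  have ne: "A \<noteq> {}" using Suc.prems by auto
  obtain b where b: "b \<in> A" "g + b \<notin> A"
    using tf_stab[OF tf Suc.prems(1)] ne g by blast
  have exits: "{x\<in>A. g + x \<notin> A} = {b}"
  proof -
    have "b \<in> {x\<in>A. g + x \<notin> A}" using b by auto
    moreover have "finite {x\<in>A. g + x \<notin> A}" using Suc.prems(1) by auto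
    moreover have "\<forall>x\<in>{x\<in>A. g + x \<notin> A}. \<forall>y\<in>{x\<in>A. g + x \<notin> A}. x = y"
      using card_le_Suc0_iff_eq[OF calculation(2)] Suc.prems(4) by simp
    ultimately show ?thesis by blast
  qed
  show ?case
  proof (cases "n = 0")
    case True
    then have "A = {b}" using Suc.prems b by (metis One_nat_def card_1_singletonE singletonD)
    then show ?thesis using b
      by (intro exI[of _ b] exI[of _ 1]) auto
  next
    case False
    define A' where "A' = A - {b}"
    have finA': "finite A'" using Suc.prems A'_def by auto
    have cA': "card A' = n" using Suc.prems b A'_def by auto
    have sub: "{x\<in>A'. g + x \<notin> A'} \<subseteq> {- g + b}"
    proof
      fix x assume x: "x \<in> {x\<in>A'. g + x \<notin> A'}"
      show "x \<in> {- g + b}"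
      proof (cases "g + x \<in> A")
        case True
        then have "g + x = b" using x A'_def by auto
        then show ?thesis by (auto simp: add.assoc[symmetric])
      next
        case False
        then have "x \<in> {x\<in>A. g + x \<notin> A}" using x A'_def by auto
        then have "x = b" using exits by auto
        then show ?thesis using x A'_def by auto
      qed
    qed
    have c1: "card {x\<in>A'. g + x \<notin> A'} \<le> 1"
      using card_mono[OF _ sub] by auto
    obtain e k where ek: "A' = {nsum_times j g + e | j. j < k}" "k \<ge> 1"
        "g + nsum_times (k - 1) g + e \<notin> A'"
      using Suc.IH[OF finA' cA' _ c1] False by (meson less_one not_le)
    have last: "nsum_times (k - 1) g + e \<in> A'" using ek(1,2) by auto
    have "g + nsum_times (k - 1) g + e \<in> A"
    proof (rule ccontr)
      assume "g + nsum_times (k - 1) g + e \<notin> A"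
      then have "nsum_times (k - 1) g + e \<in> {x\<in>A. g + x \<notin> A}"
        using last A'_def by (auto simp: add.assoc)
      then show False using exits last A'_def by auto
    qed
    then have "g + nsum_times (k - 1) g + e = b"
      using ek(3) A'_def by blast
    moreover have "nsum_times k g = g + nsum_times (k - 1) g"
      using nsum_Suc[of "k - 1" g] ek(2) by simp
    ultimately have bk: "b = nsum_times k g + e" by simp
    have "A = {nsum_times j g + e | j. j < Suc k}"
    proof -
      have "A = insert b A'" using A'_def b by auto
      also have "\<dots> = {nsum_times j g + e | j. j < Suc k}"
        using ek(1) bk by (auto simp: less_Suc_eq)
      finally show ?thesis .
    qed
    moreover have "g + nsum_times (Suc k - 1) g + e \<notin> A"
    proof -
      have "g + nsum_times (Suc k - 1) g + e = g + b" using bk by (simp add: add.assoc)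
      then show ?thesis using b(2) by simp
    qed
    ultimately show ?thesis by (intro exI[of _ e] exI[of _ "Suc k"]) simp
  qed
qed

lemma chain_ap:
  fixes g :: "'a::group_add"
  assumes tf: "torsion_free TYPE('a)" and g: "g \<noteq> 0" and fin: "finite A" and ne: "A \<noteq> {}"
    and c: "card {x\<in>A. g + x \<notin> A} \<le> 1"
  shows "is_arith_prog A"
proof -
  have "card A \<ge> 1" using fin ne by (simp add: Suc_leI card_gt_0_iff)
  then obtain e k where ek: "A = {nsum_times j g + e | j. j < k}"
    using chain_lemma[OF tf g fin refl _ c] by blast
  have "A = {e + nsum_times j (- e + g + e) | j. j < k}"
    unfolding ek nsum_conj by (simp add: add.assoc[symmetric])
  moreover have "- e + g + e \<noteq> 0" using g
    by (metis add.left_inverse add.right_neutral add_minus_cancel)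
  ultimately show ?thesis unfolding is_arith_prog_def by blast
qed



definition ss :: "'a::group_add set \<Rightarrow> 'a set \<Rightarrow> 'a set" where
  "ss Y B = (\<lambda>p. fst p + snd p) ` (Y \<times> B)"

lemma ss_mem: "y \<in> Y \<Longrightarrow> b \<in> B \<Longrightarrow> y + b \<in> ss Y B"
  unfolding ss_def by force
lemma ss_memE: "w \<in> ss Y B \<Longrightarrow> (\<And>y b. y \<in> Y \<Longrightarrow> b \<in> B \<Longrightarrow> w = y + b \<Longrightarrow> P) \<Longrightarrow> P"
  unfolding ss_def by force
lemma ss_finite: "finite Y \<Longrightarrow> finite B \<Longrightarrow> finite (ss Y B)"
  unfolding ss_def by simp
lemma ss_ltrans: "ss ((+) g ` Y) B = (+) g ` ss Y B"
  unfolding ss_def by (force simp: add.assoc image_iff)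
lemma card_ss_ltrans: "card (ss ((+) g ` Y) B) = card (ss Y B)"
  unfolding ss_ltrans by (simp add: card_image)
lemma card_ltrans: "card ((+) (g::'a::group_add) ` Y) = card Y"
  by (simp add: card_image)
lemma ss_Un: "ss (Y \<union> Z) B = ss Y B \<union> ss Z B"
  unfolding ss_def by auto
lemma ss_Int: "ss (Y \<inter> Z) B \<subseteq> ss Y B \<inter> ss Z B"
  unfolding ss_def by auto
lemma ss_mono: "Y \<subseteq> Z \<Longrightarrow> ss Y B \<subseteq> ss Z B"
  unfolding ss_def by auto
lemma ss_neg: "ss (uminus ` B) (uminus ` Y) = uminus ` ss Y B"
  unfolding ss_def by (force simp: image_iff minus_add)
lemma card_neg: "card (uminus ` (Y::'a::group_add set)) = card Y"
  by (simp add: card_image)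

lemma ss_zero: "ss {0} B = B"
  unfolding ss_def by force

lemma card_ss_ge:
  assumes "finite Y" "finite B" "b \<in> B"
  shows "card Y \<le> card (ss Y B)"
proof -
  have "card Y = card ((\<lambda>y. y + b) ` Y)" by (simp add: card_image inj_on_def)
  also have "\<dots> \<le> card (ss Y B)"
    by (rule card_mono) (use assms ss_mem in \<open>auto intro: ss_finite\<close>)
  finally show ?thesis .
qed

lemma ss_submod:
  assumes "finite Y" "finite Z" "finite B"
  shows "card (ss (Y \<inter> Z) B) + card (ss (Y \<union> Z) B) \<le> card (ss Y B) + card (ss Z B)"
proof -
  have "card (ss Y B) + card (ss Z B) = card (ss Y B \<union> ss Z B) + card (ss Y B \<inter> ss Z B)"
    by (rule card_Un_Int) (use assms in \<open>auto intro: ss_finite\<close>)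
  moreover have "card (ss (Y \<inter> Z) B) \<le> card (ss Y B \<inter> ss Z B)"
    by (rule card_mono) (use assms ss_Int[of Y Z B] in \<open>auto intro: ss_finite\<close>)
  ultimately show ?thesis by (simp add: ss_Un)
qed

lemma kemperman:
  fixes B :: "'a::group_add set"
  assumes tf: "torsion_free TYPE('a)" and finB: "finite B" and neB: "B \<noteq> {}"
  shows "finite Y \<Longrightarrow> Y \<noteq> {} \<Longrightarrow> card Y + card B \<le> card (ss Y B) + 1"
proof -
  obtain b0 where b0: "b0 \<in> B" using neB by auto
  define Fn where "Fn Y = card (ss Y B) - card Y" for Y
  have FnY: "card (ss Y B) = card Y + Fn Y" if "finite Y" for Y
    using card_ss_ge[OF that finB b0] unfolding Fn_def by simp
  define Good where "Good Y \<longleftrightarrow> finite Y \<and> Y \<noteq> {}" for Y :: "'a set"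
  obtain Y0 where Y0: "Good Y0" "\<forall>Y. Good Y \<longrightarrow> Fn Y0 \<le> Fn Y"
    using ex_has_least_nat[of Good "{b0}" Fn] by (auto simp: Good_def)
  define \<kappa> where "\<kappa> = Fn Y0"
  have kmin: "card Y + \<kappa> \<le> card (ss Y B)" if "finite Y" "Y \<noteq> {}" for Y
    using Y0(2) FnY that unfolding \<kappa>_def Good_def by fastforce
  obtain Y1 where Y1: "Good Y1 \<and> Fn Y1 = \<kappa>" "\<forall>Y. Good Y \<and> Fn Y = \<kappa> \<longrightarrow> card Y1 \<le> card Y"
    using ex_has_least_nat[of "\<lambda>Y. Good Y \<and> Fn Y = \<kappa>" Y0 card] Y0 \<kappa>_def by auto
  obtain y1 where y1: "y1 \<in> Y1" using Y1 Good_def by auto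
  define Y2 where "Y2 = (+) (- y1) ` Y1"
  have finY2: "finite Y2" using Y1 Good_def Y2_def by auto
  have cY2: "card Y2 = card Y1" unfolding Y2_def by (rule card_ltrans)
  have sY2: "card (ss Y2 B) = card Y1 + \<kappa>"
    unfolding Y2_def card_ss_ltrans using FnY Y1 Good_def by auto
  have zero: "0 \<in> Y2" using y1 Y2_def by force
  have stab: "y = 0" if y: "y \<in> Y2" for y
  proof -
    define Y3 where "Y3 = (+) y ` Y2"
    have finY3: "finite Y3" using finY2 Y3_def by auto
    have cY3: "card Y3 = card Y1" unfolding Y3_def card_ltrans cY2 ..
    have sY3: "card (ss Y3 B) = card Y1 + \<kappa>" unfolding Y3_def card_ss_ltrans sY2 ..
    have yI: "y \<in> Y2 \<inter> Y3" using y zero Y3_def by force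
    have sm: "card (ss (Y2 \<inter> Y3) B) + card (ss (Y2 \<union> Y3) B) \<le> card (ss Y2 B) + card (ss Y3 B)"
      by (rule ss_submod) (use finY2 finY3 finB in auto)
    have ui: "card Y2 + card Y3 = card (Y2 \<union> Y3) + card (Y2 \<inter> Y3)"
      by (rule card_Un_Int) (use finY2 finY3 in auto)
    have k1: "card (Y2 \<inter> Y3) + \<kappa> \<le> card (ss (Y2 \<inter> Y3) B)"
      by (rule kmin) (use finY2 yI in auto)
    have k2: "card (Y2 \<union> Y3) + \<kappa> \<le> card (ss (Y2 \<union> Y3) B)"
      by (rule kmin) (use finY2 finY3 yI in auto)
    have fI: "Fn (Y2 \<inter> Y3) = \<kappa>"
      using sm ui k1 k2 sY2 sY3 cY2 cY3 FnY[of "Y2 \<inter> Y3"] finY2 by simp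
    have "card Y1 \<le> card (Y2 \<inter> Y3)"
      using Y1(2) fI finY2 yI unfolding Good_def by blast
    hence "Y2 \<inter> Y3 = Y2"
      using cY2 finY2 by (metis Int_lower1 card_seteq)
    hence "Y2 \<subseteq> Y3" by blast
    hence "Y3 = Y2" using cY2 cY3 finY3 by (metis card_seteq order_refl)
    hence "\<forall>x\<in>Y2. y + x \<in> Y2" unfolding Y3_def by blast
    thus "y = 0" using tf_stab[OF tf finY2 zero] by blast
  qed
  have "Y2 = {0}" using stab zero by blast
  hence "\<kappa> = card B - 1"
    using sY2 cY2 by (simp add: ss_zero)
  show "finite Y \<Longrightarrow> Y \<noteq> {} \<Longrightarrow> card Y + card B \<le> card (ss Y B) + 1"
    using kmin \<open>\<kappa> = card B - 1\<close> by fastforce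
qed



definition crit :: "'a::group_add set \<Rightarrow> 'a set \<Rightarrow> bool" where
  "crit A Y \<longleftrightarrow> finite Y \<and> card Y \<ge> 2 \<and> card (ss Y A) + 1 = card Y + card A"

lemma atom_sidon:
  fixes A :: "'a::group_add set"
  assumes tf: "torsion_free TYPE('a)" and finA: "finite A" and neA: "A \<noteq> {}"
    and cY: "crit A Y" and minY: "\<forall>Z. crit A Z \<longrightarrow> card Y \<le> card Z"
    and h: "h \<noteq> 0"
  shows "card (Y \<inter> (+) h ` Y) \<le> 1"
proof (rule ccontr)
  assume "\<not> ?thesis"
  hence c2: "card (Y \<inter> (+) h ` Y) \<ge> 2" by simp
  define Y' where "Y' = (+) h ` Y"
  have finY: "finite Y" using cY crit_def by auto
  have finY': "finite Y'" using finY Y'_def by auto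
  have neI: "Y \<inter> Y' \<noteq> {}" using c2 Y'_def by auto
  have sm: "card (ss (Y \<inter> Y') A) + card (ss (Y \<union> Y') A) \<le> card (ss Y A) + card (ss Y' A)"
    by (rule ss_submod) (use finY finY' finA in auto)
  have ui: "card Y + card Y' = card (Y \<union> Y') + card (Y \<inter> Y')"
    by (rule card_Un_Int) (use finY finY' in auto)
  have k1: "card (Y \<inter> Y') + card A \<le> card (ss (Y \<inter> Y') A) + 1"
    by (rule kemperman[OF tf finA neA]) (use finY neI in auto)
  have k2: "card (Y \<union> Y') + card A \<le> card (ss (Y \<union> Y') A) + 1"
    by (rule kemperman[OF tf finA neA]) (use finY finY' neI in auto)
  have e1: "card Y' = card Y" unfolding Y'_def by (rule card_ltrans)
  have e2: "card (ss Y' A) = card (ss Y A)" unfolding Y'_def by (rule card_ss_ltrans)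
  have "crit A (Y \<inter> Y')"
    unfolding crit_def using finY c2 Y'_def sm ui k1 k2 e1 e2 cY[unfolded crit_def] by auto
  hence "card Y \<le> card (Y \<inter> Y')" using minY by blast
  hence "Y \<inter> Y' = Y" using finY by (metis Int_lower1 card_seteq)
  hence "Y \<subseteq> Y'" by blast
  hence "Y' = Y" using e1 finY' by (metis card_seteq order_refl)
  hence "\<forall>x\<in>Y. h + x \<in> Y" unfolding Y'_def by blast
  moreover obtain y where "y \<in> Y" using neI by auto
  ultimately have "h = 0" using tf_stab[OF tf finY] by blast
  with h show False by simp
qed

lemma atom_rs:
  fixes A :: "'a::group_add set"
  assumes tf: "torsion_free TYPE('a)" and finA: "finite A" and neA: "A \<noteq> {}"
    and cY: "crit A Y" and minY: "\<forall>Z. crit A Z \<longrightarrow> card Y \<le> card Z"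
  shows "\<forall>y1\<in>Y. \<forall>y2\<in>Y. \<forall>y3\<in>Y. \<forall>y4\<in>Y. y1 - y2 = y3 - y4 \<longrightarrow> y1 \<noteq> y2 \<longrightarrow> y1 = y3"
proof (intro ballI impI)
  fix y1 y2 y3 y4 assume ys: "y1 \<in> Y" "y2 \<in> Y" "y3 \<in> Y" "y4 \<in> Y" and e: "y1 - y2 = y3 - y4"
    and ne: "y1 \<noteq> y2"
  define h where "h = y1 - y2"
  have h0: "h \<noteq> 0" using ne h_def by simp
  have "y1 = h + y2" using h_def by simp
  hence m1: "y1 \<in> Y \<inter> (+) h ` Y" using ys by auto
  have "y3 = h + y4" using h_def e by (simp add: diff_eq_eq)
  hence m3: "y3 \<in> Y \<inter> (+) h ` Y" using ys by auto
  have "card (Y \<inter> (+) h ` Y) \<le> 1" by (rule atom_sidon[OF tf finA neA cY minY h0])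
  moreover have "finite (Y \<inter> (+) h ` Y)" using cY crit_def by auto
  ultimately show "y1 = y3" using m1 m3 card_le_Suc0_iff_eq by (metis One_nat_def)
qed



lemma counting:
  fixes Y B :: "'a::group_add set"
  assumes finY: "finite Y" and finB: "finite B"
    and RS: "\<forall>y1\<in>Y. \<forall>y2\<in>Y. \<forall>y3\<in>Y. \<forall>y4\<in>Y. y1 - y2 = y3 - y4 \<longrightarrow> y1 \<noteq> y2 \<longrightarrow> y1 = y3"
    and LS: "\<forall>b1\<in>B. \<forall>b2\<in>B. \<forall>b3\<in>B. \<forall>b4\<in>B. - b1 + b2 = - b3 + b4 \<longrightarrow> b1 \<noteq> b2 \<longrightarrow> b1 = b3"
    and cs: "card (ss Y B) + 1 = card Y + card B"
    and s3: "card Y \<ge> 3" and t2: "card B \<ge> 2"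
  shows False
proof -
  define s where "s = card Y"
  define t where "t = card B"
  define PP where "PP = Y \<times> B"
  define sm where "sm p = fst p + snd p" for p :: "'a \<times> 'a"
  define D where "D = {(p, q). p \<in> PP \<and> q \<in> PP \<and> p \<noteq> q \<and> sm p = sm q}"
  define OY where "OY = {(y, y'). y \<in> Y \<and> y' \<in> Y \<and> y \<noteq> y'}"
  define OB where "OB = {(b, b'). b \<in> B \<and> b' \<in> B \<and> b \<noteq> b'}"
  have finPP: "finite PP" using finY finB PP_def by auto
  have finD: "finite D"
    by (rule finite_subset[of _ "PP \<times> PP"]) (use finPP D_def in auto)
  have cOY: "card OY = s * s - s"
  proof -
    have "OY = Y \<times> Y - (\<lambda>y. (y, y)) ` Y" unfolding OY_def by auto
    moreover have "card ((\<lambda>y. (y, y)) ` Y) = s" unfolding s_def by (simp add: card_image inj_on_def)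
    ultimately show ?thesis using finY unfolding s_def
      by (simp add: card_Diff_subset card_cartesian_product image_subset_iff)
  qed
  have cOB: "card OB = t * t - t"
  proof -
    have "OB = B \<times> B - (\<lambda>y. (y, y)) ` B" unfolding OB_def by auto
    moreover have "card ((\<lambda>y. (y, y)) ` B) = t" unfolding t_def by (simp add: card_image inj_on_def)
    ultimately show ?thesis using finB unfolding t_def
      by (simp add: card_Diff_subset card_cartesian_product image_subset_iff)
  qed
  have D1: "card D \<le> s * s - s"
  proof -
    have "card D \<le> card OY"
    proof (rule card_inj_on_le[where f = "\<lambda>(p, q). (fst p, fst q)"])
      show "finite OY" using finY OY_def by (auto intro: finite_subset[of _ "Y \<times> Y"])
      show "(\<lambda>(p, q). (fst p, fst q)) ` D \<subseteq> OY"
      proof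
        fix x assume "x \<in> (\<lambda>(p, q). (fst p, fst q)) ` D"
        then obtain y b y' b' where x: "x = (y, y')" and d: "((y, b), (y', b')) \<in> D" by force
        then have "y \<noteq> y'" unfolding D_def sm_def by auto
        then show "x \<in> OY" using d x unfolding D_def OY_def PP_def by auto
      qed
      show "inj_on (\<lambda>(p, q). (fst p, fst q)) D"
      proof (rule inj_onI)
        fix u v assume u: "u \<in> D" and v: "v \<in> D" and e: "(\<lambda>(p, q). (fst p, fst q)) u = (\<lambda>(p, q). (fst p, fst q)) v"
        obtain y b y' b' where u': "u = ((y, b), (y', b'))" by (metis prod.collapse)
        obtain y2 b2 y2' b2' where v': "v = ((y2, b2), (y2', b2'))" by (metis prod.collapse)
        have yy: "y2 = y" "y2' = y'" using e u' v' by auto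
        have mem: "y \<in> Y" "b \<in> B" "y' \<in> Y" "b' \<in> B" "b2 \<in> B" "b2' \<in> B"
          using u v u' v' yy unfolding D_def PP_def by auto
        have w1: "y + b = y' + b'" and ne1: "(y, b) \<noteq> (y', b')" using u u' unfolding D_def sm_def by auto
        have w2: "y + b2 = y' + b2'" using v v' yy unfolding D_def sm_def by auto
        show "u = v"
        proof (cases "b = b2")
          case True
          then have "y' + b' = y' + b2'" using w1 w2 by simp
          then have bb': "b' = b2'" by simp
          show ?thesis unfolding u' v' yy True bb' by (rule refl)
        next
          case False
          have "- b + b2 = - b' + b2'"
          proof -
            have e1: "- b + b2 = - (y + b) + (y + b2)" by (simp add: diff_conv_add_uminus minus_add add.assoc del: add_uminus_conv_diff)
            have e2: "- b' + b2' = - (y' + b') + (y' + b2')" by (simp add: diff_conv_add_uminus minus_add add.assoc del: add_uminus_conv_diff)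
            show ?thesis unfolding e1 e2 w1 w2 ..
          qed
          then have "b = b'" using LS[rule_format, of b b2 b' b2'] mem False by simp
          then have "y = y'" using w1 by simp
          then show ?thesis using ne1 \<open>b = b'\<close> by simp
        qed
      qed
    qed
    then show ?thesis using cOY by simp
  qed
  have D2: "card D \<le> t * t - t"
  proof -
    have "card D \<le> card OB"
    proof (rule card_inj_on_le[where f = "\<lambda>(p, q). (snd p, snd q)"])
      show "finite OB" using finB OB_def by (auto intro: finite_subset[of _ "B \<times> B"])
      show "(\<lambda>(p, q). (snd p, snd q)) ` D \<subseteq> OB"
      proof
        fix x assume "x \<in> (\<lambda>(p, q). (snd p, snd q)) ` D"
        then obtain y b y' b' where x: "x = (b, b')" and d: "((y, b), (y', b')) \<in> D" by force
        then have "b \<noteq> b'" unfolding D_def sm_def by auto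
        then show "x \<in> OB" using d x unfolding D_def OB_def PP_def by auto
      qed
      show "inj_on (\<lambda>(p, q). (snd p, snd q)) D"
      proof (rule inj_onI)
        fix u v assume u: "u \<in> D" and v: "v \<in> D" and e: "(\<lambda>(p, q). (snd p, snd q)) u = (\<lambda>(p, q). (snd p, snd q)) v"
        obtain y b y' b' where u': "u = ((y, b), (y', b'))" by (metis prod.collapse)
        obtain y2 b2 y2' b2' where v': "v = ((y2, b2), (y2', b2'))" by (metis prod.collapse)
        have bb: "b2 = b" "b2' = b'" using e u' v' by auto
        have mem: "y \<in> Y" "b \<in> B" "y' \<in> Y" "b' \<in> B" "y2 \<in> Y" "y2' \<in> Y"
          using u v u' v' bb unfolding D_def PP_def by auto
        have w1: "y + b = y' + b'" and ne1: "(y, b) \<noteq> (y', b')" using u u' unfolding D_def sm_def by auto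
        have w2: "y2 + b = y2' + b'" using v v' bb unfolding D_def sm_def by auto
        show "u = v"
        proof (cases "y = y2")
          case True
          then have "y' + b' = y2' + b'" using w1 w2 by simp
          then have yy': "y' = y2'" by simp
          show ?thesis unfolding u' v' bb True yy' by (rule refl)
        next
          case False
          have "y - y2 = y' - y2'"
          proof -
            have "y - y2 = (y + b) - (y2 + b)" by (simp add: diff_conv_add_uminus minus_add add.assoc del: add_uminus_conv_diff)
            also have "\<dots> = (y' + b') - (y2' + b')" using w1 w2 by simp
            also have "\<dots> = y' - y2'" by (simp add: diff_conv_add_uminus minus_add add.assoc del: add_uminus_conv_diff)
            finally show ?thesis .
          qed
          then have "y = y'" using RS[rule_format, of y y2 y' y2'] mem False by simp
          then have "b = b'" using w1 by simp
          then show ?thesis using ne1 \<open>y = y'\<close> by simp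
        qed
      qed
    qed
    then show ?thesis using cOB by simp
  qed
  define W where "W = ss Y B"
  have finW: "finite W" using finY finB W_def ss_finite by auto
  define c where "c w = (SOME p. p \<in> PP \<and> sm p = w)" for w
  have c_prop: "c w \<in> PP \<and> sm (c w) = w" if "w \<in> W" for w
  proof -
    from that obtain y b where "y \<in> Y" "b \<in> B" "w = y + b" unfolding W_def by (rule ss_memE)
    then have "\<exists>p. p \<in> PP \<and> sm p = w" unfolding PP_def sm_def by force
    then show ?thesis unfolding c_def by (rule someI_ex)
  qed
  define C where "C = c ` W"
  have CPP: "C \<subseteq> PP" using c_prop C_def by auto
  have cC: "card C \<le> card W" unfolding C_def using finW by (rule card_image_le)
  have smW: "sm p \<in> W" if "p \<in> PP" for p
    using that unfolding PP_def sm_def W_def by (auto intro: ss_mem)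
  define R where "R = PP - C"
  have finR: "finite R" using finPP R_def by auto
  have cR: "card R = s * t - card C"
    unfolding R_def s_def t_def PP_def using CPP finPP
    by (simp add: card_Diff_subset PP_def card_cartesian_product finite_subset)
  define f1 where "f1 p = (p, c (sm p))" for p
  define f2 where "f2 p = (c (sm p), p)" for p
  have sub1: "f1 ` R \<union> f2 ` R \<subseteq> D"
  proof
    fix x assume "x \<in> f1 ` R \<union> f2 ` R"
    then obtain p where p: "p \<in> R" and x: "x = f1 p \<or> x = f2 p" by auto
    have pPP: "p \<in> PP" and pC: "p \<notin> C" using p R_def by auto
    have cp: "c (sm p) \<in> PP" "sm (c (sm p)) = sm p" using c_prop smW pPP by auto
    have "c (sm p) \<in> C" using smW pPP C_def by auto
    hence "p \<noteq> c (sm p)" using pC by auto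
    then show "x \<in> D" using x cp pPP unfolding D_def f1_def f2_def by auto
  qed
  have disj: "f1 ` R \<inter> f2 ` R = {}"
  proof -
    { fix p q assume "p \<in> R" "q \<in> R" "f1 p = f2 q"
      then have "p = c (sm q)" unfolding f1_def f2_def by auto
      moreover have "c (sm q) \<in> C" using \<open>q \<in> R\<close> smW R_def C_def by auto
      ultimately have False using \<open>p \<in> R\<close> R_def by auto }
    then show ?thesis by blast
  qed
  have "card (f1 ` R) = card R" by (rule card_image) (auto simp: inj_on_def f1_def)
  moreover have "card (f2 ` R) = card R" by (rule card_image) (auto simp: inj_on_def f2_def)
  moreover have "card (f1 ` R \<union> f2 ` R) = card (f1 ` R) + card (f2 ` R)"
    by (rule card_Un_disjoint) (use finR disj in auto)
  moreover have "card (f1 ` R \<union> f2 ` R) \<le> card D" by (rule card_mono[OF finD sub1])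
  ultimately have DR: "2 * card R \<le> card D" by simp
  have Wst: "card W + 1 = s + t" using cs W_def s_def t_def by simp
  have s3': "s \<ge> 3" and t2': "t \<ge> 2" using s3 t2 s_def t_def by auto
  have key: "2 * (s * t - card W) \<le> card D" using DR cR cC by linarith
  obtain s' where s': "s = Suc s'" using s3' by (cases s) auto
  obtain t' where t': "t = Suc t'" using t2' by (cases t) auto
  have Wst': "card W = s' + t' + 1" using Wst s' t' by simp
  have st: "s * t - card W = s' * t'" unfolding Wst' s' t' by simp
  have ss: "s * s - s = s' * s" unfolding s' by simp
  have tt: "t * t - t = t' * t" unfolding t' by simp
  have k2: "2 * (s' * t') \<le> card D" using key st by simp
  have sp: "s' > 0" using s' s3' by simp
  have tp: "t' > 0" using t' t2' by simp
  have a1: "2 * (s' * t') \<le> s' * s" using k2 D1 ss by linarith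
  hence "s' * (2 * t') \<le> s' * s" by (simp add: ac_simps)
  hence b1: "2 * t' \<le> s" using sp mult_le_cancel1 by blast
  have a2: "2 * (s' * t') \<le> t' * t" using k2 D2 tt by linarith
  hence "t' * (2 * s') \<le> t' * t" by (simp add: ac_simps)
  hence b2: "2 * s' \<le> t" using tp mult_le_cancel1 by blast
  from b1 b2 s' t' s3' have False by linarith
  then show False .
qed



lemma ss_single: "ss {y} A = (+) y ` A"
  unfolding ss_def by force

lemma inverse_kemp:
  fixes A :: "'a::group_add set"
  assumes tf: "torsion_free TYPE('a)" and finA: "finite A" and cA: "card A \<ge> 2"
    and cP: "crit A P"
  shows "\<exists>g. g \<noteq> 0 \<and> card {x\<in>A. g + x \<notin> A} \<le> 1"
proof -
  have neA: "A \<noteq> {}" using cA by auto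
  obtain Y where Y: "crit A Y" "\<forall>Z. crit A Z \<longrightarrow> card Y \<le> card Z"
    using ex_has_least_nat[of "crit A" P card] cP by auto
  have finY: "finite Y" and cY2: "card Y \<ge> 2" and csY: "card (ss Y A) + 1 = card Y + card A"
    using Y(1) crit_def by auto
  show ?thesis
  proof (cases "card Y = 2")
    case True
    then obtain y1 y2 where yy: "Y = {y1, y2}" "y1 \<noteq> y2" by (meson card_2_iff)
    define g where "g = - y1 + y2"
    have "y1 + g = y2" unfolding g_def by (simp add: add.assoc[symmetric])
    then have g0: "g \<noteq> 0" using yy(2) by auto
    have e2: "(+) y2 ` A = (+) y1 ` ((+) g ` A)"
      unfolding g_def image_image by (simp add: add.assoc[symmetric])
    have "ss Y A = (+) y1 ` (A \<union> (+) g ` A)"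
    proof -
      have "Y = {y1} \<union> {y2}" using yy by auto
      then have "ss Y A = ss {y1} A \<union> ss {y2} A" by (simp only: ss_Un)
      then have "ss Y A = (+) y1 ` A \<union> (+) y2 ` A" by (simp only: ss_single)
      then show ?thesis using e2 by (simp add: image_Un)
    qed
    then have "card (ss Y A) = card (A \<union> (+) g ` A)" by (simp add: card_image)
    then have cU: "card (A \<union> (+) g ` A) = card A + 1" using csY True by simp
    have "A \<union> (+) g ` A = A \<union> ((+) g ` A - A)" by auto
    moreover have "card (A \<union> ((+) g ` A - A)) = card A + card ((+) g ` A - A)"
      by (rule card_Un_disjoint) (use finA in auto)
    ultimately have c1: "card ((+) g ` A - A) = 1" using cU by simp
    have "(+) g ` {x\<in>A. g + x \<notin> A} = (+) g ` A - A" by auto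
    moreover have "card ((+) g ` {x\<in>A. g + x \<notin> A}) = card {x\<in>A. g + x \<notin> A}"
      by (simp add: card_image)
    ultimately have "card {x\<in>A. g + x \<notin> A} = 1" using c1 by simp
    then show ?thesis using g0 by auto
  next
    case False
    then have cY3: "card Y \<ge> 3" using cY2 by simp
    have RSY: "\<forall>y1\<in>Y. \<forall>y2\<in>Y. \<forall>y3\<in>Y. \<forall>y4\<in>Y. y1 - y2 = y3 - y4 \<longrightarrow> y1 \<noteq> y2 \<longrightarrow> y1 = y3"
      by (rule atom_rs[OF tf finA neA Y(1) Y(2)])
    define nY where "nY = uminus ` Y"
    define nA where "nA = uminus ` A"
    have finnY: "finite nY" using finY nY_def by auto
    have nenY: "nY \<noteq> {}" using cY2 nY_def by auto
    have cnY: "card nY = card Y" unfolding nY_def by (rule card_neg)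
    have "crit nY nA"
      unfolding crit_def nA_def nY_def using finA cA csY
      by (simp add: ss_neg card_neg)
    then obtain Z where Z: "crit nY Z" "\<forall>Z'. crit nY Z' \<longrightarrow> card Z \<le> card Z'"
      using ex_has_least_nat[of "crit nY" nA card] by auto
    have RSZ: "\<forall>y1\<in>Z. \<forall>y2\<in>Z. \<forall>y3\<in>Z. \<forall>y4\<in>Z. y1 - y2 = y3 - y4 \<longrightarrow> y1 \<noteq> y2 \<longrightarrow> y1 = y3"
      by (rule atom_rs[OF tf finnY nenY Z(1) Z(2)])
    define B where "B = uminus ` Z"
    have finZ: "finite Z" and cZ: "card Z \<ge> 2" and csZ: "card (ss Z nY) + 1 = card Z + card nY"
      using Z(1) crit_def by auto
    have finB: "finite B" using finZ B_def by auto
    have cB: "card B = card Z" unfolding B_def by (rule card_neg)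
    have nnY: "uminus ` nY = Y" unfolding nY_def by (simp add: image_image)
    have "ss Y B = uminus ` ss Z nY"
      using ss_neg[of nY Z] unfolding B_def nnY by simp
    then have csYB: "card (ss Y B) + 1 = card Y + card B"
      using csZ cnY cB by (simp add: card_neg)
    have LSB: "\<forall>b1\<in>B. \<forall>b2\<in>B. \<forall>b3\<in>B. \<forall>b4\<in>B. - b1 + b2 = - b3 + b4 \<longrightarrow> b1 \<noteq> b2 \<longrightarrow> b1 = b3"
    proof (intro ballI impI)
      fix b1 b2 b3 b4 assume bs: "b1 \<in> B" "b2 \<in> B" "b3 \<in> B" "b4 \<in> B"
        and e: "- b1 + b2 = - b3 + b4" and ne: "b1 \<noteq> b2"
      obtain z1 where z1: "z1 \<in> Z" "b1 = - z1" using bs(1) unfolding B_def by (rule imageE) simp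
      obtain z2 where z2: "z2 \<in> Z" "b2 = - z2" using bs(2) unfolding B_def by (rule imageE) simp
      obtain z3 where z3: "z3 \<in> Z" "b3 = - z3" using bs(3) unfolding B_def by (rule imageE) simp
      obtain z4 where z4: "z4 \<in> Z" "b4 = - z4" using bs(4) unfolding B_def by (rule imageE) simp
      note zs = z1 z2 z3 z4
      have "z1 - z2 = z3 - z4" using e zs by simp
      moreover have "z1 \<noteq> z2" using ne zs by auto
      ultimately have "z1 = z3" using RSZ[rule_format, of z1 z2 z3 z4] zs by simp
      then show "b1 = b3" using zs by simp
    qed
    have False
      by (rule counting[OF finY finB RSY LSB csYB cY3]) (use cZ cB in simp)
    then show ?thesis ..
  qed
qed



definition Sig :: "nat \<Rightarrow> (nat \<Rightarrow> 'a::group_add) \<Rightarrow> nat set \<Rightarrow> 'a set" where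
  "Sig l a I = {sum_list (map a is) | is. length is = l \<and> distinct is \<and> set is \<subseteq> I}"

lemma Sigma_l_Sig: "Sigma_l l m a = Sig l a {1..m}"
  unfolding Sigma_l_def Sig_def ..

lemma SigI: "length js = l \<Longrightarrow> distinct js \<Longrightarrow> set js \<subseteq> I \<Longrightarrow> sum_list (map a js) \<in> Sig l a I"
  unfolding Sig_def by blast

lemma Sig_finite: "finite I \<Longrightarrow> finite (Sig l a I)"
proof -
  assume fI: "finite I"
  have "Sig l a I \<subseteq> (\<lambda>xs. sum_list (map a xs)) ` {xs. set xs \<subseteq> I \<and> length xs = l}"
  proof
    fix w assume "w \<in> Sig l a I"
    then obtain js where "w = sum_list (map a js)" "length js = l" "set js \<subseteq> I"
      unfolding Sig_def by blast
    then show "w \<in> (\<lambda>xs. sum_list (map a xs)) ` {xs. set xs \<subseteq> I \<and> length xs = l}"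
      by (intro image_eqI[of _ _ js]) auto
  qed
  then show ?thesis by (rule finite_subset) (rule finite_imageI[OF finite_lists_length_eq[OF fI]])
qed

lemma exists_list:
  fixes J :: "nat set"
  assumes "finite J"
  shows "\<exists>js. length js = card J \<and> distinct js \<and> set js = J"
  using assms by (intro exI[of _ "sorted_list_of_set J"]) simp

definition rep :: "(nat \<Rightarrow> 'a) \<Rightarrow> nat set \<Rightarrow> 'a \<Rightarrow> nat" where
  "rep a I x = (SOME i. i \<in> I \<and> a i = x)"

lemma rep_prop: "x \<in> a ` I \<Longrightarrow> rep a I x \<in> I \<and> a (rep a I x) = x"
  unfolding rep_def by (rule someI_ex) auto

definition reps :: "(nat \<Rightarrow> 'a) \<Rightarrow> nat set \<Rightarrow> nat set" where
  "reps a I = rep a I ` (a ` I)"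

lemma reps_sub: "reps a I \<subseteq> I"
  unfolding reps_def using rep_prop by fastforce

lemma reps_img: "a ` reps a I = a ` I"
proof -
  have "(\<lambda>x. a (rep a I x)) ` (a ` I) = (\<lambda>x. x) ` (a ` I)"
    by (rule image_cong[OF refl]) (simp add: rep_prop)
  then show ?thesis by (simp add: reps_def image_image)
qed

lemma reps_inj: "inj_on a (reps a I)"
proof (rule inj_onI)
  fix i j assume i: "i \<in> reps a I" and j: "j \<in> reps a I" and e: "a i = a j"
  obtain x where x: "x \<in> a ` I" "i = rep a I x" using i unfolding reps_def by blast
  obtain y where y: "y \<in> a ` I" "j = rep a I y" using j unfolding reps_def by blast
  have "x = y" using rep_prop[OF x(1)] rep_prop[OF y(1)] x(2) y(2) e by simp
  then show "i = j" using x y by simp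
qed

lemma reps_card: "finite I \<Longrightarrow> card (reps a I) = card (a ` I)"
  using reps_img[of a I] reps_inj[of a I] by (metis card_image)

lemma fiber_split:
  assumes fI: "finite I" and x: "x \<in> a ` I"
  shows "card {i\<in>I. a i = x} = Suc (card {i\<in>I - reps a I. a i = x})"
proof -
  obtain t where t: "t \<in> reps a I" "a t = x" using x reps_img by (metis imageE)
  have uniq: "i = t" if "i \<in> reps a I" "a i = x" for i
    using inj_onD[OF reps_inj[of a I], of i t] that t by simp
  have tI: "t \<in> I" using t(1) reps_sub by blast
  have "{i\<in>I. a i = x} = insert t {i\<in>I - reps a I. a i = x}"
    using t tI uniq by blast
  moreover have "t \<notin> {i\<in>I - reps a I. a i = x}" using t by auto
  ultimately show ?thesis using fI by simp
qed

lemma fiber_sum: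
  assumes fI: "finite I"
  shows "(\<Sum>x\<in>a ` I. card {i\<in>I. a i = x}) = card I"
proof -
  have "I = (\<Union>x\<in>a ` I. {i\<in>I. a i = x})" by auto
  then have "card I = card (\<Union>x\<in>a ` I. {i\<in>I. a i = x})" by simp
  also have "\<dots> = (\<Sum>x\<in>a ` I. card {i\<in>I. a i = x})"
    by (rule card_UN_disjoint) (use fI in auto)
  finally show ?thesis ..
qed

lemma step_sub:
  assumes fI: "finite I"
  shows "ss (Sig k a (I - reps a I)) (a ` I) \<subseteq> Sig (Suc k) a I"
proof
  fix w assume "w \<in> ss (Sig k a (I - reps a I)) (a ` I)"
  then obtain s v where s: "s \<in> Sig k a (I - reps a I)" and v: "v \<in> a ` I" and w: "w = s + v"
    by (rule ss_memE)
  obtain js where js: "s = sum_list (map a js)" "length js = k" "distinct js" "set js \<subseteq> I - reps a I"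
    using s unfolding Sig_def by blast
  obtain t where t: "t \<in> reps a I" "a t = v" using v reps_img by (metis imageE)
  have "t \<notin> set js" using js t by auto
  moreover have "t \<in> I" using t reps_sub by auto
  ultimately have "sum_list (map a (js @ [t])) \<in> Sig (Suc k) a I"
    by (intro SigI) (use js in auto)
  then show "w \<in> Sig (Suc k) a I" using w js t by simp
qed

lemma Sig_ne:
  assumes "finite I" "k \<le> card I"
  shows "Sig k a I \<noteq> {}"
proof -
  obtain J where J: "J \<subseteq> I" "card J = k" "finite J" using obtain_subset_with_card_n[OF assms(2)] by blast
  obtain js where "length js = card J" "distinct js" "set js = J" using exists_list[OF J(3)] by blast
  then have "sum_list (map a js) \<in> Sig k a I" by (intro SigI) (use J in auto)
  then show ?thesis by auto
qed

lemma case1: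
  assumes fI: "finite I" and l1: "l \<ge> 1" and lI: "l \<le> card I"
    and small: "card I \<le> card (a ` I) + (l - 1)"
  shows "card I + 1 \<le> card (Sig l a I) + l"
proof -
  define T where "T = reps a I"
  have TI: "T \<subseteq> I" unfolding T_def by (rule reps_sub)
  have cT: "card T = card (a ` I)" unfolding T_def by (rule reps_card[OF fI])
  have injT: "inj_on a T" unfolding T_def by (rule reps_inj)
  have finT: "finite T" using TI fI finite_subset by auto
  have cIT: "card (I - T) = card I - card T" using TI fI by (simp add: card_Diff_subset finite_subset)
  have "l - 1 - card (I - T) \<le> card T" using cIT cT lI by linarith
  then obtain K where K: "K \<subseteq> T" "card K = l - 1 - card (I - T)" "finite K"
    using obtain_subset_with_card_n by metis
  define J where "J = (I - T) \<union> K"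
  have JI: "J \<subseteq> I" using K TI J_def by auto
  have finJ: "finite J" using JI fI finite_subset by auto
  have cJ: "card J = l - 1"
  proof -
    have "card J = card (I - T) + card K" unfolding J_def
      by (rule card_Un_disjoint) (use fI K in auto)
    then show ?thesis using K cIT cT small by linarith
  qed
  obtain js where js: "length js = l - 1" "distinct js" "set js = J"
    using exists_list[OF finJ] cJ by auto
  define s where "s = sum_list (map a js)"
  define R where "R = I - J"
  have RT: "R \<subseteq> T" using R_def J_def by auto
  have injR: "inj_on a R" using injT RT inj_on_subset by auto
  have "(\<lambda>i. s + a i) ` R \<subseteq> Sig l a I"
  proof
    fix w assume "w \<in> (\<lambda>i. s + a i) ` R"
    then obtain i where i: "i \<in> R" "w = s + a i" by auto
    have "sum_list (map a (js @ [i])) \<in> Sig l a I"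
      by (intro SigI) (use js i R_def JI l1 in auto)
    then show "w \<in> Sig l a I" using i s_def by simp
  qed
  then have "card ((\<lambda>i. s + a i) ` R) \<le> card (Sig l a I)"
    using Sig_finite[OF fI] card_mono by blast
  moreover have "card ((\<lambda>i. s + a i) ` R) = card R"
    by (rule card_image) (use injR in \<open>auto simp: inj_on_def\<close>)
  moreover have "card R = card I - (l - 1)" unfolding R_def using JI fI cJ
    by (simp add: card_Diff_subset finite_subset)
  ultimately show ?thesis using lI l1 by linarith
qed

lemma lower_bound:
  fixes a :: "nat \<Rightarrow> 'a::group_add"
  assumes tf: "torsion_free TYPE('a)"
  shows "finite I \<Longrightarrow> l \<ge> 1 \<Longrightarrow> l \<le> card I \<Longrightarrow> (\<forall>x. card {i\<in>I. a i = x} \<le> l) \<Longrightarrow>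
    card I + 1 \<le> card (Sig l a I) + l"
proof (induction l arbitrary: I)
  case 0 then show ?case by simp
next
  case (Suc l I)
  show ?case
  proof (cases "card I \<le> card (a ` I) + l")
    case True
    then show ?thesis using case1[OF Suc.prems(1,2,3)] by simp
  next
    case False
    define T where "T = reps a I"
    define I' where "I' = I - T"
    have TI: "T \<subseteq> I" unfolding T_def by (rule reps_sub)
    have cT: "card T = card (a ` I)" unfolding T_def by (rule reps_card[OF Suc.prems(1)])
    have finI': "finite I'" using Suc.prems(1) I'_def by auto
    have cI': "card I' = card I - card (a ` I)" using TI cT Suc.prems(1) I'_def
      by (simp add: card_Diff_subset finite_subset)
    have l1: "l \<ge> 1"
    proof (rule ccontr)
      assume "\<not> l \<ge> 1"
      then have l0: "l = 0" by simp
      have "inj_on a I"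
      proof (rule inj_onI)
        fix i j assume ij: "i \<in> I" "j \<in> I" "a i = a j"
        have "card {k\<in>I. a k = a i} \<le> 1" using Suc.prems(4) l0 by simp
        moreover have "finite {k\<in>I. a k = a i}" using Suc.prems(1) by auto
        ultimately show "i = j" using ij card_le_Suc0_iff_eq by (metis (mono_tags, lifting) One_nat_def mem_Collect_eq)
      qed
      then have "card (a ` I) = card I" by (simp add: card_image)
      then show False using False l0 by simp
    qed
    have bnd: "\<forall>x. card {i\<in>I'. a i = x} \<le> l"
    proof
      fix x
      show "card {i\<in>I'. a i = x} \<le> l"
      proof (cases "x \<in> a ` I")
        case True
        have "card {i\<in>I. a i = x} = Suc (card {i\<in>I'. a i = x})"
          unfolding I'_def T_def by (rule fiber_split[OF Suc.prems(1) True])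
        moreover have "card {i\<in>I. a i = x} \<le> Suc l" using Suc.prems(4) by blast
        ultimately show ?thesis by simp
      next
        case False
        then have e0: "{i\<in>I'. a i = x} = {}" unfolding I'_def by blast
        show ?thesis unfolding e0 by simp
      qed
    qed
    have lI': "l \<le> card I'" using cI' False by linarith
    have IH: "card I' + 1 \<le> card (Sig l a I') + l"
      by (rule Suc.IH[OF finI' l1 lI' bnd])
    have neS: "Sig l a I' \<noteq> {}" by (rule Sig_ne[OF finI' lI'])
    have neA: "a ` I \<noteq> {}" using Suc.prems(3) by auto
    have K: "card (Sig l a I') + card (a ` I) \<le> card (ss (Sig l a I') (a ` I)) + 1"
      by (rule kemperman[OF tf]) (use Suc.prems(1) finI' neS neA Sig_finite in auto)
    have "card (ss (Sig l a I') (a ` I)) \<le> card (Sig (Suc l) a I)"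
      by (rule card_mono[OF Sig_finite[OF Suc.prems(1)] step_sub[OF Suc.prems(1), of l a, folded T_def I'_def]])
    then show ?thesis using K IH cI' False by linarith
  qed
qed



lemma reps_bound:
  assumes fI: "finite I" and b: "\<forall>x. card {i\<in>I. a i = x} \<le> Suc k"
  shows "\<forall>x. card {i\<in>I - reps a I. a i = x} \<le> k"
proof
  fix x
  show "card {i\<in>I - reps a I. a i = x} \<le> k"
  proof (cases "x \<in> a ` I")
    case True
    have "card {i\<in>I. a i = x} = Suc (card {i\<in>I - reps a I. a i = x})"
      by (rule fiber_split[OF fI True])
    moreover have "card {i\<in>I. a i = x} \<le> Suc k" using b by blast
    ultimately show ?thesis by simp
  next
    case False
    then have e0: "{i\<in>I - reps a I. a i = x} = {}" by blast
    show ?thesis unfolding e0 by simp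
  qed
qed

theorem theorem6p7:
  fixes l m t :: nat and a :: "nat \<Rightarrow> 'a::group_add"
  assumes "l \<ge> 1" and "m \<ge> 1" and "l + 2 \<le> m"
    and "torsion_free TYPE('a)"
    and "card {x \<in> a ` {1..m}. mu l m a x \<ge> 2} \<ge> 2"
    and "t \<ge> 2"
    and "\<exists>S \<subseteq> {x \<in> a ` {1..m}. mu l m a x \<ge> 2}. card S = t \<and> (\<Sum>x\<in>S. rho m a x) \<ge> l + t"
    and "\<forall>t'. 0 < t' \<and> t' < t \<longrightarrow>
           \<not> (\<exists>S \<subseteq> {x \<in> a ` {1..m}. mu l m a x \<ge> 2}. card S = t' \<and> (\<Sum>x\<in>S. rho m a x) \<ge> l + t')"
    and "int (card (Sigma_l l m a)) = int (\<Sum>x\<in>a ` {1..m}. mu l m a x) - int l + 1"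
  shows "is_arith_prog (a ` {1..m})"
proof -
  note tf = assms(4)
  define I where "I = {1..m}"
  define A where "A = a ` I"
  define X where "X = {x \<in> A. mu l m a x \<ge> 2}"
  have finI: "finite I" using I_def by simp
  have cI: "card I = m" using I_def by simp
  have finA: "finite A" using finI A_def by simp
  have rhoI: "rho m a x = card {i\<in>I. a i = x}" for x unfolding rho_def I_def ..
  have finX: "finite X" using finA X_def by simp
  have cX: "card X \<ge> 2" using assms(5) unfolding X_def A_def I_def .
  then obtain x0 where x0: "x0 \<in> X" by fastforce
  have l2: "l \<ge> 2" using x0 unfolding X_def mu_def by auto
  have rle: "card {i\<in>I. a i = x} \<le> l" for x
  proof (rule ccontr)
    assume "\<not> ?thesis"
    then have big: "card {i\<in>I. a i = x} \<ge> l + 1" by simp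
    have "{i\<in>I. a i = x} \<noteq> {}"
    proof
      assume e: "{i\<in>I. a i = x} = {}"
      show False using big unfolding e by simp
    qed
    then have xA: "x \<in> A" unfolding A_def by auto
    have "mu l m a x = l" unfolding mu_def rhoI using big by simp
    then have xX: "x \<in> X" using xA l2 X_def by simp
    have "\<exists>S \<subseteq> {x \<in> a ` {1..m}. mu l m a x \<ge> 2}. card S = 1 \<and> (\<Sum>x\<in>S. rho m a x) \<ge> l + 1"
      by (rule exI[of _ "{x}"]) (use xX big in \<open>auto simp: X_def A_def I_def rhoI\<close>)
    then show False using assms(8) assms(6) by auto
  qed
  have mu_rho: "mu l m a x = card {i\<in>I. a i = x}" for x
    unfolding mu_def rhoI using rle[of x] by simp
  have summu: "(\<Sum>x\<in>A. mu l m a x) = m"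
    unfolding mu_rho A_def using fiber_sum[OF finI, of a] cI by simp
  define Sg where "Sg = Sigma_l l m a"
  have Sg_eq: "Sg = Sig l a I" unfolding Sg_def I_def by (rule Sigma_l_Sig)
  have lm: "l \<le> m" using assms(3) by simp
  have cSg: "card Sg + l = m + 1"
    using assms(9) summu lm unfolding Sg_def A_def I_def by linarith
  define n where "n = card A"
  have XA: "X \<subseteq> A" unfolding X_def by auto
  have n2: "n \<ge> 2" using card_mono[OF finA XA] cX n_def by simp
  have mn: "m \<ge> l + n"
  proof -
    obtain S where S: "S \<subseteq> X" "card S = t" "(\<Sum>x\<in>S. rho m a x) \<ge> l + t"
      using assms(7) unfolding X_def A_def I_def by blast
    have SA: "S \<subseteq> A" using S XA by auto
    have finS: "finite S" using SA finA finite_subset by auto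
    have pos: "card {i\<in>I. a i = x} \<ge> 1" if "x \<in> A" for x
    proof -
      have "{i\<in>I. a i = x} \<noteq> {}" using that A_def by auto
      moreover have "finite {i\<in>I. a i = x}" using finI by simp
      ultimately show ?thesis by (simp add: Suc_leI card_gt_0_iff)
    qed
    have "m = (\<Sum>x\<in>A. card {i\<in>I. a i = x})" using fiber_sum[OF finI, of a] cI A_def by simp
    also have "\<dots> = (\<Sum>x\<in>S. card {i\<in>I. a i = x}) + (\<Sum>x\<in>A - S. card {i\<in>I. a i = x})"
      using sum.subset_diff[OF SA finA, of "\<lambda>x. card {i\<in>I. a i = x}"] by (simp add: add.commute)
    also have "(\<Sum>x\<in>A - S. card {i\<in>I. a i = x}) \<ge> (\<Sum>x\<in>A - S. 1)"
      by (rule sum_mono) (use pos in auto)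
    moreover have "(\<Sum>x\<in>A - S. (1::nat)) = n - t"
      using SA finA S(2) n_def by (simp add: card_Diff_subset finS)
    moreover have "(\<Sum>x\<in>S. card {i\<in>I. a i = x}) \<ge> l + t" using S(3) rhoI by simp
    moreover have "t \<le> n" using card_mono[OF finA SA] S(2) n_def by simp
    ultimately show ?thesis by linarith
  qed
  define I' where "I' = I - reps a I"
  have finI': "finite I'" using finI I'_def by simp
  have cI': "card I' = m - n"
    unfolding I'_def using reps_sub[of a I] reps_card[OF finI, of a] finI cI n_def A_def
    by (simp add: card_Diff_subset finite_subset)
  have bnd: "\<forall>x. card {i\<in>I'. a i = x} \<le> l - 1"
    unfolding I'_def by (rule reps_bound[OF finI]) (use rle l2 in \<open>auto simp: Suc_diff_1\<close>)
  define P where "P = Sig (l - 1) a I'"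
  have finP: "finite P" using Sig_finite[OF finI'] P_def by simp
  have LB: "card I' + 1 \<le> card P + (l - 1)"
    unfolding P_def by (rule lower_bound[OF tf finI']) (use l2 cI' mn bnd in auto)
  have cP2: "card P \<ge> 2" using LB cI' mn l2 by linarith
  have neP: "P \<noteq> {}" using cP2 by auto
  have neA: "A \<noteq> {}" using n2 n_def by auto
  have sub: "ss P A \<subseteq> Sg"
  proof -
    have "ss P A \<subseteq> Sig (Suc (l - 1)) a I"
      unfolding P_def I'_def A_def by (rule step_sub[OF finI])
    then show ?thesis using Sg_eq l2 by simp
  qed
  have finSg: "finite Sg" using Sg_eq Sig_finite[OF finI] by simp
  have K: "card P + card A \<le> card (ss P A) + 1"
    by (rule kemperman[OF tf]) (use finA neA finP neP in auto)
  have "card (ss P A) \<le> card Sg" by (rule card_mono[OF finSg sub])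
  then have "crit A P"
    unfolding crit_def using finP cP2 K cSg LB cI' mn n_def l2 by linarith
  then obtain g where g: "g \<noteq> 0" "card {x\<in>A. g + x \<notin> A} \<le> 1"
    using inverse_kemp[OF tf finA] n2 n_def by auto
  have "is_arith_prog A" by (rule chain_ap[OF tf g(1) finA neA g(2)])
  then show ?thesis unfolding A_def I_def .
qed


end
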